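(* Let $G$ be a profinite group that is a Cartesian product of non-abelian finite simple groups. If every element of $G$ has a countable Engel sink, then $G$ is finite.
   Context: Commutators are left-normed, $[a,b]=a^{-1}b^{-1}ab$, and $[x,{}_n g]=[x,g,\dots,g]$ with $g$ repeated $n$ times. An Engel sink of an element $g$ of a group $G$ is a set $\mathscr E(g)\subseteq G$ such that for every $x\in G$ there is a positive integer $n(x,g)$ with $[x,{}_n g]\in\mathscr E(g)$ for all $n\ge n(x,g)$. "Countable" means finite or denumerable. *)

theory Defs
  imports "HOL-Algebra.Algebra" "HOL-Library.Countable_Set"
begin

definition group_commutator :: "('a, 'b) monoid_scheme \<Rightarrow> 'a \<Rightarrow> 'a \<Rightarrow> 'a" where
  "group_commutator G a b = inv\<^bsub>G\<^esub> a \<otimes>\<^bsub>G\<^esub> inv\<^bsub>G\<^esub> b \<otimes>\<^bsub>G\<^esub> a \<otimes>\<^bsub>G\<^esub> b"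

fun engel_comm :: "('a, 'b) monoid_scheme \<Rightarrow> 'a \<Rightarrow> 'a \<Rightarrow> nat \<Rightarrow> 'a" where
  "engel_comm G x g 0 = x"
| "engel_comm G x g (Suc n) = group_commutator G (engel_comm G x g n) g"

definition engel_sink :: "('a, 'b) monoid_scheme \<Rightarrow> 'a \<Rightarrow> 'a set \<Rightarrow> bool" where
  "engel_sink G g E \<longleftrightarrow> E \<subseteq> carrier G \<and>
     (\<forall>x\<in>carrier G. \<exists>m>0. \<forall>n\<ge>m. engel_comm G x g n \<in> E)"

end

theory Submission
  imports Defs
begin


definition conjs :: "('a,'b) monoid_scheme \<Rightarrow> 'a \<Rightarrow> 'a set \<Rightarrow> 'a set" where
  "conjs G w M = (\<lambda>m. inv\<^bsub>G\<^esub> w \<otimes>\<^bsub>G\<^esub> m \<otimes>\<^bsub>G\<^esub> w) ` M"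

context group begin

lemma gc1 [simp]: "x \<in> carrier G \<Longrightarrow> y \<in> carrier G \<Longrightarrow> x \<otimes> (inv x \<otimes> y) = y"
  by (simp add: m_assoc[symmetric])
lemma gc2 [simp]: "x \<in> carrier G \<Longrightarrow> y \<in> carrier G \<Longrightarrow> inv x \<otimes> (x \<otimes> y) = y"
  by (simp add: m_assoc[symmetric])

lemma engel_comm_closed: "x \<in> carrier G \<Longrightarrow> g \<in> carrier G \<Longrightarrow> engel_comm G x g n \<in> carrier G"
  by (induction n) (auto simp: group_commutator_def)

lemma conjs_sub: "subgroup H G \<Longrightarrow> M \<subseteq> H \<Longrightarrow> w \<in> H \<Longrightarrow> conjs G w M \<subseteq> H"
  by (auto simp: conjs_def subgroup.m_closed subgroup.m_inv_closed)

lemma conjs_subgroup: assumes "subgroup M G" "w \<in> carrier G" shows "subgroup (conjs G w M) G"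
proof (rule subgroupI)
  have MG: "M \<subseteq> carrier G" using assms subgroup.subset by blast
  show "conjs G w M \<subseteq> carrier G" using MG assms by (auto simp: conjs_def)
  show "conjs G w M \<noteq> {}" using assms subgroup.one_closed by (auto simp: conjs_def)
  fix a assume "a \<in> conjs G w M"
  then obtain m where m: "m \<in> M" "a = inv w \<otimes> m \<otimes> w" by (auto simp: conjs_def)
  have mc: "m \<in> carrier G" using m MG by blast
  have "inv a = inv w \<otimes> inv m \<otimes> w" using m mc assms
    by (simp add: inv_mult_group m_assoc)
  then show "inv a \<in> conjs G w M" unfolding conjs_def using subgroup.m_inv_closed[OF assms(1) m(1)] by blast
next
  have MG: "M \<subseteq> carrier G" using assms subgroup.subset by blast
  fix a b assume "a \<in> conjs G w M" "b \<in> conjs G w M"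
  then obtain m n where m: "m \<in> M" "a = inv w \<otimes> m \<otimes> w" "n \<in> M" "b = inv w \<otimes> n \<otimes> w" by (auto simp: conjs_def)
  have "a \<otimes> b = inv w \<otimes> (m \<otimes> n) \<otimes> w" using m MG assms
    by (simp add: m_assoc subsetD)
  then show "a \<otimes> b \<in> conjs G w M" unfolding conjs_def using subgroup.m_closed[OF assms(1) m(1) m(3)] by blast
qed

lemma conjs_card: assumes "M \<subseteq> carrier G" "w \<in> carrier G" shows "card (conjs G w M) = card M"
  unfolding conjs_def
proof (rule card_image, rule inj_onI)
  fix x y assume "x \<in> M" "y \<in> M" "inv w \<otimes> x \<otimes> w = inv w \<otimes> y \<otimes> w"
  then show "x = y" using assms \<open>x \<in> M\<close> \<open>y \<in> M\<close> by (simp add: m_assoc subsetD)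
qed

lemma conjs_mult: assumes "M \<subseteq> carrier G" "a \<in> carrier G" "b \<in> carrier G"
  shows "conjs G (a \<otimes> b) M = conjs G b (conjs G a M)"
  unfolding conjs_def image_image
  apply (rule image_cong[OF refl])
  using assms by (auto simp: inv_mult_group m_assoc)

lemma conjs_one: "M \<subseteq> carrier G \<Longrightarrow> conjs G \<one> M = M"
  by (auto simp: conjs_def image_def subset_eq)

lemma conjs_inv: assumes "M \<subseteq> carrier G" "a \<in> carrier G" "conjs G a M = M"
  shows "conjs G (inv a) M = M"
proof -
  have "conjs G (a \<otimes> inv a) M = conjs G (inv a) (conjs G a M)"
    using assms by (intro conjs_mult) auto
  then show ?thesis using assms conjs_one by simp
qed

lemma normalizer_subgroup: assumes "subgroup D G"
  shows "subgroup {x \<in> carrier G. conjs G x D = D} G"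
proof (rule subgroupI)
  have DG: "D \<subseteq> carrier G" using assms subgroup.subset by blast
  show "{x \<in> carrier G. conjs G x D = D} \<subseteq> carrier G" by auto
  show "{x \<in> carrier G. conjs G x D = D} \<noteq> {}" using conjs_one DG by auto
  show "inv a \<in> {x \<in> carrier G. conjs G x D = D}" if "a \<in> {x \<in> carrier G. conjs G x D = D}" for a
    using that conjs_inv[OF DG] by simp
  show "a \<otimes> b \<in> {x \<in> carrier G. conjs G x D = D}"
    if "a \<in> {x \<in> carrier G. conjs G x D = D}" "b \<in> {x \<in> carrier G. conjs G x D = D}" for a b
    using that by (simp add: conjs_mult[OF DG])
qed


lemma engel_walk:
  assumes "subgroup N G" "u \<in> N" "y \<in> N"
  shows "engel_comm G u y k \<in> N"
proof (induction k)
  case 0 show ?case using assms(2) by simp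
next
  case (Suc k)
  show ?case unfolding engel_comm.simps group_commutator_def
    by (intro subgroup.m_closed[OF assms(1)] subgroup.m_inv_closed[OF assms(1)] Suc assms(3))
qed

lemma exists_max_subgroup:
  assumes fin: "finite (carrier G)" and "subgroup K G" "K \<subset> H"
  obtains M where "subgroup M G" "K \<subseteq> M" "M \<subset> H"
    "\<And>M'. subgroup M' G \<Longrightarrow> M \<subseteq> M' \<Longrightarrow> M' \<subset> H \<Longrightarrow> M' = M"
proof -
  let ?S = "{M. subgroup M G \<and> K \<subseteq> M \<and> M \<subset> H}"
  have finS: "finite ?S"
  proof (rule finite_subset[of _ "Pow (carrier G)"])
    show "?S \<subseteq> Pow (carrier G)"
    proof
      fix M assume "M \<in> ?S"
      then have "subgroup M G" by simp
      then show "M \<in> Pow (carrier G)" using subgroup.subset by simp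
    qed
  qed (use fin in simp)
  have "K \<in> ?S" using assms by auto
  then have ne: "?S \<noteq> {}" by blast
  define m where "m = Max (card ` ?S)"
  have "m \<in> card ` ?S" unfolding m_def using finS ne by (intro Max_in) auto
  then obtain M where M: "M \<in> ?S" "card M = m" by auto
  have mx: "card M' \<le> m" if "M' \<in> ?S" for M' unfolding m_def using finS that by (intro Max_ge) auto
  show ?thesis
  proof (rule that)
    show "subgroup M G" "K \<subseteq> M" "M \<subset> H" using M by auto
    fix M' assume M': "subgroup M' G" "M \<subseteq> M'" "M' \<subset> H"
    then have "M' \<in> ?S" using M by auto
    then have "card M' \<le> card M" using mx M by auto
    moreover have "finite M'" using subgroup.subset[OF M'(1)] fin finite_subset by auto
    ultimately show "M' = M" using M'(2) card_seteq by blast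
  qed
qed


lemma nc_lemma:
  assumes fin: "finite (carrier G)"
    and eng: "\<And>x g. x \<in> carrier G \<Longrightarrow> g \<in> carrier G \<Longrightarrow> \<exists>n. engel_comm G x g n = \<one>"
  shows "subgroup H G \<Longrightarrow> subgroup K G \<Longrightarrow> K \<subset> H \<Longrightarrow> \<exists>y\<in>H-K. conjs G y K = K"
proof (induction "card H" arbitrary: H K rule: less_induct)
  case less
  note H = less.prems(1) and Ksg = less.prems(2) and KH = less.prems(3)
  have HG: "H \<subseteq> carrier G" using subgroup.subset[OF H] .
  have finH: "finite H" using HG fin finite_subset by auto
  obtain M where M: "subgroup M G" "K \<subseteq> M" "M \<subset> H"
    and maxM: "\<And>M'. subgroup M' G \<Longrightarrow> M \<subseteq> M' \<Longrightarrow> M' \<subset> H \<Longrightarrow> M' = M"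
    using exists_max_subgroup[OF fin Ksg KH] by blast
  have MG: "M \<subseteq> carrier G" using subgroup.subset[OF M(1)] .
  have finM: "finite M" using MG fin finite_subset by auto
  have cMH: "card M < card H" using M(3) finH psubset_card_mono by blast
  show ?case
  proof (cases "K = M")
    case False
    then have "K \<subset> M" using M(2) by blast
    then obtain y where "y \<in> M - K" "conjs G y K = K" using less.hyps[OF cMH M(1) Ksg] by blast
    then show ?thesis using M(3) by blast
  next
    case True
    show ?thesis
    proof (rule ccontr)
      assume "\<not> ?thesis"
      then have nn: "\<And>y. y \<in> H \<Longrightarrow> y \<notin> M \<Longrightarrow> conjs G y M \<noteq> M" using True by blast
      let ?W = "{w \<in> H. conjs G w M \<noteq> M}"
      obtain w0 where "w0 \<in> H" "w0 \<notin> M" using M(3) by blast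
      then have "w0 \<in> ?W" using nn by blast
      then have neW: "?W \<noteq> {}" by blast
      have finW: "finite ?W" using finH by simp
      define mm where "mm = Max ((\<lambda>w. card (M \<inter> conjs G w M)) ` ?W)"
      have "mm \<in> (\<lambda>w. card (M \<inter> conjs G w M)) ` ?W" unfolding mm_def using finW neW by (intro Max_in) auto
      then obtain w where w: "w \<in> H" "conjs G w M \<noteq> M" "card (M \<inter> conjs G w M) = mm" by auto
      have mx: "card (M \<inter> conjs G w' M) \<le> mm" if "w' \<in> H" "conjs G w' M \<noteq> M" for w'
        unfolding mm_def using finW that by (intro Max_ge) auto
      have wG: "w \<in> carrier G" using w(1) HG by blast
      define C where "C = conjs G w M"
      have Csg: "subgroup C G" unfolding C_def by (rule conjs_subgroup[OF M(1) wG])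
      have cC: "card C = card M" unfolding C_def by (rule conjs_card[OF MG wG])
      have CH: "C \<subseteq> H" unfolding C_def by (rule conjs_sub[OF H _ w(1)]) (use M(3) in blast)
      have CG: "C \<subseteq> carrier G" using CH HG by blast
      have finC: "finite C" using CG fin finite_subset by auto
      have CH': "C \<subset> H" using CH cC cMH by auto
      define D where "D = M \<inter> C"
      have Dsg: "subgroup D G" unfolding D_def using subgroups_Inter_pair[OF M(1) Csg] .
      have DG: "D \<subseteq> carrier G" using subgroup.subset[OF Dsg] .
      have finD: "finite D" using DG fin finite_subset by auto
      have DM: "D \<subset> M"
      proof -
        have "D \<noteq> M"
        proof
          assume "D = M"
          then have "M \<subseteq> C" unfolding D_def by blast
          then have "M = C" using card_seteq[OF finC] cC by auto
          then show False using w(2) C_def by simp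
        qed
        then show ?thesis unfolding D_def by blast
      qed
      have DC: "D \<subset> C"
      proof -
        have "D \<noteq> C"
        proof
          assume "D = C"
          then have "C \<subseteq> M" unfolding D_def by blast
          then have "C = M" using card_seteq[OF finM] cC by simp
          then have "M = C" by simp
          then show False using w(2) C_def by simp
        qed
        then show ?thesis unfolding D_def by blast
      qed
      have cCH: "card C < card H" using cC cMH by simp
      obtain y where y: "y \<in> M" "y \<notin> D" "conjs G y D = D"
        using less.hyps[OF cMH M(1) Dsg DM] by blast
      obtain u where u: "u \<in> C" "u \<notin> D" "conjs G u D = D"
        using less.hyps[OF cCH Csg Dsg DC] by blast
      have uM: "u \<notin> M" using u unfolding D_def by blast
      define NN where "NN = H \<inter> {x \<in> carrier G. conjs G x D = D}"
      have NNsg: "subgroup NN G" unfolding NN_def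
        by (rule subgroups_Inter_pair[OF H normalizer_subgroup[OF Dsg]])
      have yG: "y \<in> carrier G" using y(1) MG by blast
      have uG: "u \<in> carrier G" using u(1) CG by blast
      have yNN: "y \<in> NN" unfolding NN_def using y yG M(3) by blast
      have uNN: "u \<in> NN" unfolding NN_def using u uG CH by blast
      define z where "z = (\<lambda>k. engel_comm G u y k)"
      have zNN: "\<And>k. z k \<in> NN" unfolding z_def by (rule engel_walk[OF NNsg uNN yNN])
      obtain n where zn: "z n = \<one>" unfolding z_def using eng[OF uG yG] by blast
      have "\<exists>k. z k \<notin> M \<and> z (Suc k) \<in> M"
      proof (rule ccontr)
        assume "\<not> ?thesis"
        then have st: "\<And>k. z k \<notin> M \<Longrightarrow> z (Suc k) \<notin> M" by blast
        have "z k \<notin> M" for k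
        proof (induction k)
          case 0 then show ?case using uM by (simp add: z_def)
        next
          case (Suc k) then show ?case using st by blast
        qed
        then show False using zn subgroup.one_closed[OF M(1)] by metis
      qed
      then obtain k where k: "z k \<notin> M" "z (Suc k) \<in> M" by blast
      define a where "a = z k"
      have aNN: "a \<in> NN" using zNN a_def by simp
      have aG: "a \<in> carrier G" and aH: "a \<in> H" and aD: "conjs G a D = D" using aNN unfolding NN_def by auto
      have aM: "a \<notin> M" using k a_def by simp
      have c1: "inv a \<otimes> inv y \<otimes> a \<otimes> y \<in> M" using k(2) unfolding a_def z_def
        by (simp add: group_commutator_def)
      have c2: "inv a \<otimes> inv y \<otimes> a \<in> M"
      proof -
        have "inv a \<otimes> inv y \<otimes> a = (inv a \<otimes> inv y \<otimes> a \<otimes> y) \<otimes> inv y"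
          using aG yG by (simp add: m_assoc)
        then show ?thesis using subgroup.m_closed[OF M(1) c1 subgroup.m_inv_closed[OF M(1) y(1)]] by simp
      qed
      have c3: "inv a \<otimes> y \<otimes> a \<in> M"
      proof -
        have "inv (inv a \<otimes> inv y \<otimes> a) = inv a \<otimes> y \<otimes> a"
          using aG yG by (simp add: inv_mult_group m_assoc)
        then show ?thesis using subgroup.m_inv_closed[OF M(1) c2] by simp
      qed
      define C' where "C' = conjs G (inv a) M"
      have yC': "y \<in> C'"
      proof -
        have "y = inv (inv a) \<otimes> (inv a \<otimes> y \<otimes> a) \<otimes> inv a" using aG yG by (simp add: m_assoc)
        then show ?thesis unfolding C'_def conjs_def using c3 by blast
      qed
      have DC': "D \<subseteq> C'"
      proof
        fix d assume d: "d \<in> D"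
        have dG: "d \<in> carrier G" using d DG by blast
        have "inv a \<otimes> d \<otimes> a \<in> conjs G a D" unfolding conjs_def using d by blast
        then have e: "inv a \<otimes> d \<otimes> a \<in> M" using aD DM by auto
        have "d = inv (inv a) \<otimes> (inv a \<otimes> d \<otimes> a) \<otimes> inv a" using aG dG by (simp add: m_assoc)
        then show "d \<in> C'" unfolding C'_def conjs_def using e by blast
      qed
      have C'ne: "conjs G (inv a) M \<noteq> M"
      proof
        assume "conjs G (inv a) M = M"
        then have "conjs G (inv (inv a)) M = M" using conjs_inv[OF MG, of "inv a"] aG by simp
        then have "conjs G a M = M" using aG by simp
        then show False using nn[OF aH aM] by simp
      qed
      have iaH: "inv a \<in> H" using subgroup.m_inv_closed[OF H aH] .
      have le: "card (M \<inter> C') \<le> card D" using mx[OF iaH C'ne] w(3) unfolding C'_def D_def C_def by simp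
      have sub: "insert y D \<subseteq> M \<inter> C'" using yC' y(1) DC' DM by blast
      have "card (insert y D) \<le> card (M \<inter> C')" using card_mono[OF _ sub] finM by simp
      moreover have "card (insert y D) = Suc (card D)" using finD y(2) by simp
      ultimately show False using le by simp
    qed
  qed
qed


lemma centralizer_subgroup: assumes xG: "x \<in> carrier G"
  shows "subgroup {z \<in> carrier G. z \<otimes> x = x \<otimes> z} G"
proof (rule subgroupI)
  show "{z \<in> carrier G. z \<otimes> x = x \<otimes> z} \<subseteq> carrier G" by auto
  show "{z \<in> carrier G. z \<otimes> x = x \<otimes> z} \<noteq> {}" using xG by auto
  fix a assume a: "a \<in> {z \<in> carrier G. z \<otimes> x = x \<otimes> z}"
  then have aG: "a \<in> carrier G" and ax: "a \<otimes> x = x \<otimes> a" by auto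
  have "inv a \<otimes> x = inv a \<otimes> (x \<otimes> a) \<otimes> inv a" using aG xG by (simp add: m_assoc)
  also have "\<dots> = inv a \<otimes> (a \<otimes> x) \<otimes> inv a" using ax by simp
  also have "\<dots> = x \<otimes> inv a" using aG xG by (simp add: m_assoc)
  finally show "inv a \<in> {z \<in> carrier G. z \<otimes> x = x \<otimes> z}" using aG by simp
next
  fix a b assume "a \<in> {z \<in> carrier G. z \<otimes> x = x \<otimes> z}" "b \<in> {z \<in> carrier G. z \<otimes> x = x \<otimes> z}"
  then have aG: "a \<in> carrier G" and ax: "a \<otimes> x = x \<otimes> a" and bG: "b \<in> carrier G" and bx: "b \<otimes> x = x \<otimes> b" by auto
  have "a \<otimes> b \<otimes> x = a \<otimes> (x \<otimes> b)" using aG bG xG bx by (simp add: m_assoc)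
  also have "\<dots> = (a \<otimes> x) \<otimes> b" using aG bG xG by (simp add: m_assoc)
  also have "\<dots> = x \<otimes> (a \<otimes> b)" using aG bG xG ax by (simp add: m_assoc)
  finally show "a \<otimes> b \<in> {z \<in> carrier G. z \<otimes> x = x \<otimes> z}" using aG bG by simp
qed

lemma engel_simple_comm:
  assumes fin: "finite (carrier G)"
    and eng: "\<And>x g. x \<in> carrier G \<Longrightarrow> g \<in> carrier G \<Longrightarrow> \<exists>n. engel_comm G x g n = \<one>"
    and sg: "simple_group G"
  shows "comm_group G"
proof -
  have ne: "{\<one>} \<subset> carrier G" using simple_group.simple_not_triv[OF sg] one_closed by blast
  obtain M where M: "subgroup M G" "{\<one>} \<subseteq> M" "M \<subset> carrier G"
    and maxM: "\<And>M'. subgroup M' G \<Longrightarrow> M \<subseteq> M' \<Longrightarrow> M' \<subset> carrier G \<Longrightarrow> M' = M"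
    using exists_max_subgroup[OF fin triv_subgroup ne] by blast
  have MG: "M \<subseteq> carrier G" using M(3) by blast
  obtain y where y: "y \<in> carrier G - M" "conjs G y M = M"
    using nc_lemma[OF fin eng subgroup_self M(1) M(3)] by blast
  define N where "N = {x \<in> carrier G. conjs G x M = M}"
  have Nsg: "subgroup N G" unfolding N_def by (rule normalizer_subgroup[OF M(1)])
  have MN: "M \<subseteq> N"
  proof
    fix m assume m: "m \<in> M"
    have mG: "m \<in> carrier G" using m MG by blast
    have "conjs G m M \<subseteq> M" unfolding conjs_def
      using m subgroup.m_closed[OF M(1)] subgroup.m_inv_closed[OF M(1)] by auto
    moreover have "M \<subseteq> conjs G m M"
    proof
      fix x assume x: "x \<in> M"
      have xG: "x \<in> carrier G" using x MG by blast
      have "m \<otimes> x \<otimes> inv m \<in> M"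
        using subgroup.m_closed[OF M(1) subgroup.m_closed[OF M(1) m x] subgroup.m_inv_closed[OF M(1) m]] .
      moreover have "x = inv m \<otimes> (m \<otimes> x \<otimes> inv m) \<otimes> m" using mG xG by (simp add: m_assoc)
      ultimately show "x \<in> conjs G m M" unfolding conjs_def by blast
    qed
    ultimately show "m \<in> N" unfolding N_def using mG by blast
  qed
  have Nall: "N = carrier G"
  proof (rule ccontr)
    assume "N \<noteq> carrier G"
    then have "N \<subset> carrier G" using subgroup.subset[OF Nsg] by blast
    then have "N = M" using maxM[OF Nsg MN] by blast
    then show False using y unfolding N_def by blast
  qed
  have "M \<lhd> G" unfolding normal_inv_iff
  proof (intro conjI ballI)
    show "subgroup M G" by (rule M(1))
    fix x h assume x: "x \<in> carrier G" and h: "h \<in> M"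
    have "inv x \<in> N" using Nall x by simp
    then have "conjs G (inv x) M = M" unfolding N_def by simp
    moreover have "inv (inv x) \<otimes> h \<otimes> inv x \<in> conjs G (inv x) M" unfolding conjs_def using h by blast
    ultimately show "x \<otimes> h \<otimes> inv x \<in> M" using x by simp
  qed
  then have "M = carrier G \<or> M = {\<one>}" using simple_group.no_real_normal_subgroup[OF sg] by blast
  then have M1: "M = {\<one>}" using M(3) by blast
  show ?thesis
  proof (rule group_comm_groupI)
    fix x z assume x: "x \<in> carrier G" and z: "z \<in> carrier G"
    show "x \<otimes> z = z \<otimes> x"
    proof (cases "x = \<one>")
      case True then show ?thesis using z by simp
    next
      case False
      define Cx where "Cx = {z \<in> carrier G. z \<otimes> x = x \<otimes> z}"
      have Csg: "subgroup Cx G" unfolding Cx_def by (rule centralizer_subgroup[OF x])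
      have "Cx = carrier G"
      proof (rule ccontr)
        assume "Cx \<noteq> carrier G"
        then have "Cx \<subset> carrier G" using subgroup.subset[OF Csg] by blast
        moreover have "M \<subseteq> Cx" using M1 unfolding Cx_def using x by auto
        ultimately have "Cx = M" using maxM[OF Csg] by blast
        moreover have "x \<in> Cx" unfolding Cx_def using x by simp
        ultimately show False using M1 False by simp
      qed
      then have "z \<in> Cx" using z by simp
      then show ?thesis unfolding Cx_def by simp
    qed
  qed
qed

end


lemma countable_Pow_finite:
  assumes "countable (Pow I)" shows "finite I"
proof (rule ccontr)
  assume "infinite I"
  then obtain f :: "nat \<Rightarrow> 'a" where f: "inj f" "range f \<subseteq> I"
    using infinite_countable_subset by blast
  have sub: "(UNIV :: nat set set) \<subseteq> (\<lambda>T. f -` T) ` Pow I"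
  proof
    fix A :: "nat set"
    have "A = f -` (f ` A)" using f(1) by (simp add: inj_vimage_image_eq)
    moreover have "f ` A \<in> Pow I" using f(2) by auto
    ultimately show "A \<in> (\<lambda>T. f -` T) ` Pow I" by blast
  qed
  have "countable (UNIV :: nat set set)"
    by (rule countable_subset[OF sub]) (rule countable_image[OF assms])
  then have "\<exists>e::nat \<Rightarrow> nat set. range e = UNIV" using uncountable_def[of "UNIV :: nat set set"] by auto
  then obtain e :: "nat \<Rightarrow> nat set" where e: "range e = UNIV" by blast
  have "{n. n \<notin> e n} \<in> range e" using e by simp
  then obtain k where k: "{n. n \<notin> e n} = e k" by auto
  have "(k \<in> e k) = (k \<in> {n. n \<notin> e n})" using k by simp
  then show False by simp
qed

lemma (in group) engel_one: "g \<in> carrier G \<Longrightarrow> engel_comm G \<one> g n = \<one>"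
  by (induction n) (simp_all add: group_commutator_def m_assoc)

lemma (in group_hom) engel_hom:
  assumes x: "x \<in> carrier G" and g: "g \<in> carrier G"
  shows "h (engel_comm G x g n) = engel_comm H (h x) (h g) n"
proof (induction n)
  case 0 show ?case by simp
next
  case (Suc n)
  have c: "engel_comm G x g n \<in> carrier G" by (rule G.engel_comm_closed[OF x g])
  have "h (group_commutator G (engel_comm G x g n) g)
      = group_commutator H (h (engel_comm G x g n)) (h g)"
    unfolding group_commutator_def using c g by simp
  then show ?case using Suc.IH by simp
qed

lemma prod_engel:
  assumes grp: "\<And>i. i \<in> I \<Longrightarrow> group (S i)"
    and x: "x \<in> carrier (product_group I S)" and g: "g \<in> carrier (product_group I S)"
  shows "engel_comm (product_group I S) x g n = (\<lambda>i\<in>I. engel_comm (S i) (x i) (g i) n)"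
proof (induction n)
  case 0
  have "x \<in> (\<Pi>\<^sub>E i\<in>I. carrier (S i))" using x by simp
  then have "restrict x I = x" by (rule PiE_restrict)
  then show ?case by simp
next
  case (Suc n)
  let ?a = "\<lambda>i\<in>I. engel_comm (S i) (x i) (g i) n"
  have gP: "g \<in> (\<Pi>\<^sub>E i\<in>I. carrier (S i))" using g by simp
  have xP: "x \<in> (\<Pi>\<^sub>E i\<in>I. carrier (S i))" using x by simp
  have aP: "?a \<in> (\<Pi>\<^sub>E i\<in>I. carrier (S i))"
    unfolding restrict_PiE_iff
  proof
    fix i assume i: "i \<in> I"
    show "engel_comm (S i) (x i) (g i) n \<in> carrier (S i)"
      by (rule group.engel_comm_closed[OF grp[OF i] PiE_mem[OF xP i] PiE_mem[OF gP i]])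
  qed
  have "engel_comm (product_group I S) x g (Suc n) = group_commutator (product_group I S) ?a g"
    by (simp only: engel_comm.simps Suc.IH)
  also have "\<dots> = (\<lambda>i\<in>I. group_commutator (S i) (?a i) (g i))"
    unfolding group_commutator_def
    apply (simp only: inv_product_group[OF aP grp] inv_product_group[OF gP grp] mult_product_group)
    apply (rule restrict_ext)
    apply (simp only: restrict_apply' )
    done
  also have "\<dots> = (\<lambda>i\<in>I. engel_comm (S i) (x i) (g i) (Suc n))"
    by (rule restrict_ext) simp
  finally show ?case .
qed



theorem lemma7p1:
  fixes G :: "('g, 'c) monoid_scheme"
    and S :: "'i \<Rightarrow> ('a, 'b) monoid_scheme"
    and I :: "'i set"
  assumes "group G"
    and "\<And>i. i \<in> I \<Longrightarrow> simple_group (S i)"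
    and "\<And>i. i \<in> I \<Longrightarrow> finite (carrier (S i))"
    and "\<And>i. i \<in> I \<Longrightarrow> \<not> comm_group (S i)"
    and "G \<cong> product_group I S"
    and "\<forall>g\<in>carrier G. \<exists>E. engel_sink G g E \<and> countable E"
  shows "finite (carrier G)"
proof -
  have grp: "group (S i)" if i: "i \<in> I" for i
    using assms(2)[OF i, unfolded simple_group_def] by (rule conjunct1)
  let ?P = "product_group I S"
  have grpP: "group ?P" using grp by simp
  have ex: "\<forall>i\<in>I. \<exists>a. \<exists>b. a \<in> carrier (S i) \<and> b \<in> carrier (S i) \<and> (\<forall>n. engel_comm (S i) a b n \<noteq> \<one>\<^bsub>S i\<^esub>)"
  proof
    fix i assume i: "i \<in> I"
    show "\<exists>a. \<exists>b. a \<in> carrier (S i) \<and> b \<in> carrier (S i) \<and> (\<forall>n. engel_comm (S i) a b n \<noteq> \<one>\<^bsub>S i\<^esub>)"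
    proof (rule ccontr)
      assume "\<not> ?thesis"
      then have e: "\<And>x g. x \<in> carrier (S i) \<Longrightarrow> g \<in> carrier (S i) \<Longrightarrow> \<exists>n. engel_comm (S i) x g n = \<one>\<^bsub>S i\<^esub>"
        by blast
      have "comm_group (S i)"
        by (rule group.engel_simple_comm[OF grp[OF i] assms(3)[OF i] e assms(2)[OF i]])
      then show False using assms(4)[OF i] by simp
    qed
  qed
  obtain xs where xs1: "\<forall>i\<in>I. \<exists>b. xs i \<in> carrier (S i) \<and> b \<in> carrier (S i) \<and> (\<forall>n. engel_comm (S i) (xs i) b n \<noteq> \<one>\<^bsub>S i\<^esub>)"
    using bchoice[OF ex] by (elim exE) 
  obtain gs where xg: "\<forall>i\<in>I. xs i \<in> carrier (S i) \<and> gs i \<in> carrier (S i) \<and> (\<forall>n. engel_comm (S i) (xs i) (gs i) n \<noteq> \<one>\<^bsub>S i\<^esub>)"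
    using bchoice[OF xs1] by (elim exE)
  define gg where "gg = (\<lambda>i\<in>I. gs i)"
  define xT where "xT T = (\<lambda>i\<in>I. if i \<in> T then xs i else \<one>\<^bsub>S i\<^esub>)" for T
  have ggP: "gg \<in> carrier ?P" unfolding gg_def using xg by simp
  have xTP: "xT T \<in> carrier ?P" for T unfolding xT_def using xg grp by (simp add: group.is_monoid)
  define sp where "sp f = {i\<in>I. f i \<noteq> \<one>\<^bsub>S i\<^esub>}" for f
  have supp: "sp (engel_comm ?P (xT T) gg n) = T" if T: "T \<subseteq> I" for T n
  proof -
    have "engel_comm ?P (xT T) gg n = (\<lambda>i\<in>I. engel_comm (S i) (xT T i) (gg i) n)"
      by (rule prod_engel[OF grp xTP ggP])
    moreover have "engel_comm (S i) (xT T i) (gg i) n \<noteq> \<one>\<^bsub>S i\<^esub> \<longleftrightarrow> i \<in> T" if i: "i \<in> I" for i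
    proof (cases "i \<in> T")
      case True
      then show ?thesis using xg i by (simp add: xT_def gg_def)
    next
      case False
      have "engel_comm (S i) (xT T i) (gg i) n = engel_comm (S i) \<one>\<^bsub>S i\<^esub> (gs i) n"
        using False i by (simp add: xT_def gg_def)
      also have "\<dots> = \<one>\<^bsub>S i\<^esub>" using group.engel_one[OF grp[OF i]] xg i by blast
      finally show ?thesis using False by simp
    qed
    ultimately show ?thesis unfolding sp_def using T by auto
  qed
  obtain \<phi> where phi: "\<phi> \<in> iso G ?P" using assms(5) unfolding is_iso_def by blast
  have hom: "group_hom G ?P \<phi>"
    using phi assms(1) grpP unfolding group_hom_def group_hom_axioms_def iso_def by blast
  have bij: "bij_betw \<phi> (carrier G) (carrier ?P)" using phi unfolding iso_def by blast
  define \<psi> where "\<psi> = inv_into (carrier G) \<phi>"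
  have psi: "\<psi> y \<in> carrier G \<and> \<phi> (\<psi> y) = y" if "y \<in> carrier ?P" for y
    unfolding \<psi>_def using bij that
    by (metis bij_betw_def bij_betw_inv_into_right inv_into_into)
  define g' where "g' = \<psi> gg"
  have g'G: "g' \<in> carrier G" using psi ggP g'_def by blast
  obtain E where E: "engel_sink G g' E" "countable E" using assms(6) g'G by blast
  define m where "m T = (SOME m. m > 0 \<and> (\<forall>n\<ge>m. engel_comm G (\<psi> (xT T)) g' n \<in> E))" for T
  define F where "F T = engel_comm G (\<psi> (xT T)) g' (m T)" for T
  have FE: "F T \<in> E" for T
  proof -
    have "\<psi> (xT T) \<in> carrier G" using psi xTP by blast
    then have "\<exists>m. m > 0 \<and> (\<forall>n\<ge>m. engel_comm G (\<psi> (xT T)) g' n \<in> E)"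
      using E(1) unfolding engel_sink_def by blast
    then have "m T > 0 \<and> (\<forall>n\<ge>m T. engel_comm G (\<psi> (xT T)) g' n \<in> E)"
      unfolding m_def by (rule someI_ex)
    then show ?thesis unfolding F_def by blast
  qed
  have phiF: "\<phi> (F T) = engel_comm ?P (xT T) gg (m T)" for T
  proof -
    have "\<psi> (xT T) \<in> carrier G" "\<phi> (\<psi> (xT T)) = xT T" using psi xTP by blast+
    moreover have "\<phi> g' = gg" using psi ggP g'_def by blast
    ultimately show ?thesis unfolding F_def using group_hom.engel_hom[OF hom _ g'G] by simp
  qed
  have inj: "inj_on F (Pow I)"
  proof (rule inj_onI)
    fix T1 T2 assume T: "T1 \<in> Pow I" "T2 \<in> Pow I" "F T1 = F T2"
    have s1: "T1 \<subseteq> I" "T2 \<subseteq> I" using T(1,2) by auto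
    have 1: "sp (\<phi> (F T1)) = T1" unfolding phiF[of T1] by (rule supp[OF s1(1)])
    have 2: "sp (\<phi> (F T2)) = T2" unfolding phiF[of T2] by (rule supp[OF s1(2)])
    have "sp (\<phi> (F T1)) = sp (\<phi> (F T2))" by (simp only: T(3))
    then show "T1 = T2" unfolding 1 2 .
  qed
  have sub: "F ` Pow I \<subseteq> E" using FE by blast
  have "countable (F ` Pow I)" by (rule countable_subset[OF sub E(2)])
  then have "countable (Pow I)" by (rule countable_image_inj_on[OF _ inj])
  then have finI: "finite I" by (rule countable_Pow_finite)
  have "finite (\<Pi>\<^sub>E i\<in>I. carrier (S i))" by (rule finite_PiE[OF finI assms(3)])
  then have "finite (carrier ?P)" by simp
  then show ?thesis using bij_betw_finite[OF bij] by simp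
qed

end
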